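(* Let $\rho_{\rm up},\rho_{\rm low}\in[0,1]$. Suppose there is an element-based generator $\mathds{G}_{\rm vanilla}$ that, for any countable collection $\mathcal{L}$, generates from $\mathcal{L}$ in the limit with element-based upper (respectively lower) density $\rho_{\rm up}$ (respectively $\rho_{\rm low}$) under enumerations with no noise and no omissions. Then there exists an element-based generator $\mathds{G}_{\rm tolerant}$ that, for any countable collection $\mathcal{L}$, generates from $\mathcal{L}$ in the limit with element-based upper (respectively lower) density $\rho_{\rm up}$ (respectively $\rho_{\rm low}$) under enumerations with finite noise and finite omissions.
   Context: The universe is $U=\mathbb{N}$ with its natural order. A language is an infinite subset of $U$; a collection is a countable family of languages. For $A,B\subseteq\mathbb{N}$ with $B=\{b_1<b_2<\cdots\}$, $\mu_{\rm up}(A,B)=\limsup_n\frac1n|A\cap\{b_1,\dots,b_n\}|$ and $\mu_{\rm low}(A,B)=\liminf_n\frac1n|A\cap\{b_1,\dots,b_n\}|$. An enumeration of $K$ with no noise and no omissions lists every element of $K$ exactly once and nothing else; an enumeration of $K$ with finite noise and finite omissions is a sequence of distinct elements listing every element of some $\hat K\subseteq K$ with $|K\setminus\hat K|<\infty$ and only finitely many elements outside $\hat K$. An element-based generator outputs at step $n$, from $x_1,\dots,x_n$ and knowledge of $\mathcal{L}$ (not $K$), an element $w_n\notin\{x_1,\dots,x_n,w_1,\dots,w_{n-1}\}$. It generates in the limit if for every $K\in\mathcal{L}$ and admissible enumeration there is $n^\star$ with $w_n\in K$ for $n\ge n^\star$; with element-based upper (lower) density $\rho$ if additionally $\mu_{\rm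 up}(W,K)\ge\rho$ ($\mu_{\rm low}(W,K)\ge\rho$), where $W=\{w_1,w_2,\dots\}$. *)

theory Defs
  imports Main "HOL-Library.Infinite_Set" "HOL-Library.Liminf_Limsup" "HOL-Library.Extended_Real"
begin

text \<open>Counting density of A relative to B = {b_1 < b_2 < ...} (B infinite);
  enumerate B is the increasing enumeration of B, indexed from 0.\<close>
definition mu_up :: "nat set \<Rightarrow> nat set \<Rightarrow> ereal" where
  "mu_up A B = limsup (\<lambda>n. ereal (real (card (A \<inter> enumerate B ` {..<Suc n})) / real (Suc n)))"

definition mu_low :: "nat set \<Rightarrow> nat set \<Rightarrow> ereal" where
  "mu_low A B = liminf (\<lambda>n. ereal (real (card (A \<inter> enumerate B ` {..<Suc n})) / real (Suc n)))"

definition collection :: "(nat \<Rightarrow> nat set) \<Rightarrow> bool" where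
  "collection L \<longleftrightarrow> (\<forall>i. infinite (L i))"

text \<open>A generator maps the collection and the prefix [x_0..x_n] to the output w_n.\<close>
type_synonym generator = "(nat \<Rightarrow> nat set) \<Rightarrow> nat list \<Rightarrow> nat"

definition gen_out :: "generator \<Rightarrow> (nat \<Rightarrow> nat set) \<Rightarrow> (nat \<Rightarrow> nat) \<Rightarrow> nat \<Rightarrow> nat" where
  "gen_out G L x n = G L (map x [0..<Suc n])"

definition element_based :: "generator \<Rightarrow> bool" where
  "element_based G \<longleftrightarrow> (\<forall>L x n. gen_out G L x n \<notin> x ` {..n} \<and>
                                  gen_out G L x n \<notin> gen_out G L x ` {..<n})"

definition enum_exact :: "nat set \<Rightarrow> (nat \<Rightarrow> nat) \<Rightarrow> bool" where
  "enum_exact K x \<longleftrightarrow> inj x \<and> range x = K"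

definition enum_tolerant :: "nat set \<Rightarrow> (nat \<Rightarrow> nat) \<Rightarrow> bool" where
  "enum_tolerant K x \<longleftrightarrow> inj x \<and>
     (\<exists>Kh. Kh \<subseteq> K \<and> finite (K - Kh) \<and> Kh \<subseteq> range x \<and> finite (range x - Kh))"

definition generates_density ::
  "(nat set \<Rightarrow> nat set \<Rightarrow> ereal) \<Rightarrow> real \<Rightarrow> (nat set \<Rightarrow> (nat \<Rightarrow> nat) \<Rightarrow> bool)
    \<Rightarrow> generator \<Rightarrow> (nat \<Rightarrow> nat set) \<Rightarrow> bool" where
  "generates_density mu rho adm G L \<longleftrightarrow>
     (\<forall>K \<in> range L. \<forall>x. adm K x \<longrightarrow>
        (\<exists>n0. \<forall>n\<ge>n0. gen_out G L x n \<in> K) \<and>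
        mu (range (gen_out G L x)) K \<ge> ereal rho)"

end

theory Submission
  imports Defs "HOL-Analysis.Analysis" "HOL-Library.Countable"
begin

lemma enum_img_Suc:
  "enumerate S ` {..<Suc N} = insert (enumerate S 0) (enumerate (S - {enumerate S 0}) ` {..<N})"
proof -
  have "enumerate S ` {..<Suc N} = insert (enumerate S 0) (enumerate S ` Suc ` {..<N})"
    by (simp add: lessThan_Suc_eq_insert_0)
  also have "enumerate S ` Suc ` {..<N} = enumerate (S - {enumerate S 0}) ` {..<N}"
    by (simp add: image_image enumerate_Suc')
  finally show ?thesis .
qed

lemma ins_img:
  fixes K :: "nat set"
  assumes "infinite K" "a \<notin> K" "card {k\<in>K. k<a} = m" "m \<le> N"
  shows "enumerate (insert a K) ` {..<Suc N} = insert a (enumerate K ` {..<N})"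
  using assms
proof (induction m arbitrary: K N)
  case 0
  have fin: "finite {k\<in>K. k<a}" by simp
  have "\<forall>k\<in>K. a < k" using 0 fin by (auto simp: card_eq_0_iff) (metis linorder_neqE_nat)
  then have e0: "enumerate (insert a K) 0 = a"
    by (simp add: enumerate_0) (rule Least_equality, auto simp: less_imp_le)
  have "insert a K - {a} = K" using 0 by auto
  then show ?case using enum_img_Suc[of "insert a K" N] e0 by simp
next
  case (Suc m)
  have fin: "finite {k\<in>K. k<a}" by simp
  from Suc.prems(3) obtain k where k: "k \<in> K" "k < a"
    by (metis (mono_tags, lifting) card.empty empty_Collect_eq nat.distinct(1))
  define k0 where "k0 = enumerate K 0"
  have k0K: "k0 \<in> K" unfolding k0_def using Suc.prems(1) by (rule enumerate_in_set)
  have k0le: "\<And>y. y \<in> K \<Longrightarrow> k0 \<le> y" unfolding k0_def by (simp add: enumerate_0 Least_le)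
  have k0a: "k0 < a" using k0le[OF k(1)] k(2) by simp
  have e0: "enumerate (insert a K) 0 = k0"
    unfolding enumerate_0 by (rule Least_equality) (use k0K k0le k0a in auto)
  have ins: "insert a K - {k0} = insert a (K - {k0})" using k0a by auto
  obtain N' where N: "N = Suc N'" using Suc.prems(4) by (cases N) auto
  have "{k\<in>K - {k0}. k<a} = {k\<in>K. k<a} - {k0}" by auto
  then have c: "card {k\<in>K - {k0}. k<a} = m" using Suc.prems(3) k0K k0a fin by simp
  have IH: "enumerate (insert a (K - {k0})) ` {..<Suc N'} = insert a (enumerate (K - {k0}) ` {..<N'})"
    by (rule Suc.IH) (use Suc.prems c N in auto)
  have "enumerate (insert a K) ` {..<Suc N} = insert k0 (insert a (enumerate (K - {k0}) ` {..<N'}))"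
    using enum_img_Suc[of "insert a K" "Suc N'"] e0 ins IH N by simp
  also have "\<dots> = insert a (enumerate K ` {..<N})"
    using enum_img_Suc[of K N'] N k0_def by auto
  finally show ?case .
qed

lemma card_ins_bounds:
  assumes "finite E"
  shows "card (W \<inter> E) \<le> card (W \<inter> insert x E)" "card (W \<inter> insert x E) \<le> card (W \<inter> E) + 1"
proof -
  show "card (W \<inter> E) \<le> card (W \<inter> insert x E)" by (rule card_mono) (use assms in auto)
  have sub: "W \<inter> insert x E \<subseteq> insert x (W \<inter> E)" by auto
  have "card (W \<inter> insert x E) \<le> card (insert x (W \<inter> E))" by (rule card_mono[OF _ sub]) (use assms in auto)
  also have "\<dots> \<le> card (W \<inter> E) + 1" by (simp add: card_insert_le_m1 card_insert_if assms)
  finally show "card (W \<inter> insert x E) \<le> card (W \<inter> E) + 1" .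
qed

lemma lim_close:
  fixes f g :: "nat \<Rightarrow> real"
  assumes "\<And>n. n \<ge> m \<Longrightarrow> \<bar>g n - f n\<bar> \<le> inverse (real (Suc n))"
  shows "limsup (\<lambda>n. ereal (g n)) = limsup (\<lambda>n. ereal (f n))"
    "liminf (\<lambda>n. ereal (g n)) = liminf (\<lambda>n. ereal (f n))"
proof -
  have "(\<lambda>n. g n - f n) \<longlonglongrightarrow> 0"
    apply (rule Lim_null_comparison[OF _ LIMSEQ_inverse_real_of_nat])
    using assms by (auto simp: eventually_sequentially)
  then have t: "(\<lambda>n. ereal (g n - f n)) \<longlonglongrightarrow> 0" by (simp add: zero_ereal_def tendsto_ereal)
  have eq: "(\<lambda>n. ereal (g n)) = (\<lambda>n. ereal (g n - f n) + ereal (f n))" by auto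
  show "limsup (\<lambda>n. ereal (g n)) = limsup (\<lambda>n. ereal (f n))"
    unfolding eq by (subst ereal_limsup_lim_add[OF t]) auto
  show "liminf (\<lambda>n. ereal (g n)) = liminf (\<lambda>n. ereal (f n))"
    unfolding eq by (subst ereal_liminf_lim_add[OF t]) auto
qed

lemma mu_insert:
  fixes K :: "nat set"
  assumes "infinite K" "a \<notin> K"
  shows "mu_up W (insert a K) = mu_up W K" "mu_low W (insert a K) = mu_low W K"
proof -
  define m where "m = card {k\<in>K. k<a}"
  define g where "g n = real (card (W \<inter> enumerate (insert a K) ` {..<Suc n})) / real (Suc n)" for n
  define f where "f n = real (card (W \<inter> enumerate K ` {..<Suc n})) / real (Suc n)" for n
  have b: "\<bar>g n - f n\<bar> \<le> inverse (real (Suc n))" if "n \<ge> m" for n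
  proof -
    define E where "E = enumerate K ` {..<n}"
    have fE: "finite E" unfolding E_def by simp
    have aE: "a \<notin> E" unfolding E_def using assms enumerate_in_set by blast
    have "enumerate (insert a K) ` {..<Suc n} = insert a E"
      unfolding E_def by (rule ins_img) (use assms m_def that in auto)
    then have c2: "card (W \<inter> enumerate (insert a K) ` {..<Suc n}) = card (W \<inter> insert a E)" by simp
    have "enumerate K ` {..<Suc n} = insert (enumerate K n) E" unfolding E_def by (simp add: lessThan_Suc)
    then have c1: "card (W \<inter> enumerate K ` {..<Suc n}) = card (W \<inter> insert (enumerate K n) E)" by simp
    note B1 = card_ins_bounds[OF fE, of W a] and B2 = card_ins_bounds[OF fE, of W "enumerate K n"]
    have "\<bar>real (card (W \<inter> insert a E)) - real (card (W \<inter> insert (enumerate K n) E))\<bar> \<le> 1"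
      using B1 B2 by linarith
    then have "\<bar>real (card (W \<inter> insert a E)) - real (card (W \<inter> insert (enumerate K n) E))\<bar> / real (Suc n)
       \<le> 1 / real (Suc n)" by (simp add: divide_right_mono)
    then show ?thesis unfolding g_def f_def c1 c2
      by (simp add: diff_divide_distrib[symmetric] inverse_eq_divide)
  qed
  show "mu_up W (insert a K) = mu_up W K"
    unfolding mu_up_def using lim_close(1)[OF b] unfolding g_def f_def by simp
  show "mu_low W (insert a K) = mu_low W K"
    unfolding mu_low_def using lim_close(2)[OF b] unfolding g_def f_def by simp
qed

lemma mu_union:
  assumes ins: "\<And>K a. infinite K \<Longrightarrow> a \<notin> K \<Longrightarrow> mu W (insert a K) = mu W K"
    and "finite B" "infinite K"
  shows "mu W (K \<union> B) = mu W K"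
  using assms(2)
proof (induction B rule: finite_induct)
  case empty then show ?case by simp
next
  case (insert b B)
  show ?case
  proof (cases "b \<in> K \<union> B")
    case True
    then have "K \<union> insert b B = K \<union> B" by auto
    then show ?thesis using insert by simp
  next
    case False
    have "K \<union> insert b B = insert b (K \<union> B)" by auto
    then show ?thesis using ins[of "K \<union> B" b] False insert assms(3) by simp
  qed
qed

lemma mu_diff:
  assumes ins: "\<And>K a. infinite K \<Longrightarrow> a \<notin> K \<Longrightarrow> mu W (insert a K) = mu W K"
    and "finite A" "infinite K"
  shows "mu W (K - A) = mu W K"
  using assms(2)
proof (induction A rule: finite_induct)
  case empty then show ?case by simp
next
  case (insert b A)
  have e: "K - insert b A = (K - A) - {b}" by auto
  show ?case
  proof (cases "b \<in> K - A")
    case False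
    then have "K - insert b A = K - A" by auto
    then show ?thesis using insert by simp
  next
    case True
    have inf: "infinite ((K - A) - {b})" using assms(3) insert(1) by simp
    have "insert b ((K - A) - {b}) = K - A" using True by auto
    then have "mu W (K - A) = mu W (insert b ((K - A) - {b}))" by simp
    also have "\<dots> = mu W ((K - A) - {b})" by (rule ins[OF inf]) simp
    finally show ?thesis using e insert by simp
  qed
qed

lemma mu_mod:
  assumes ins: "\<And>K a. infinite K \<Longrightarrow> a \<notin> K \<Longrightarrow> mu W (insert a K) = mu W K"
    and "finite A" "finite B" "infinite K"
  shows "mu W ((K - A) \<union> B) = mu W K"
  using mu_union[where mu=mu and W=W, OF ins assms(3), of "K - A"] mu_diff[where mu=mu and W=W, OF ins assms(2,4)] assms by simp

definition modL :: "(nat \<Rightarrow> nat set) \<Rightarrow> nat \<Rightarrow> nat set" where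
  "modL L k = (case (from_nat k :: nat \<times> nat list \<times> nat list) of (i, as, bs) \<Rightarrow> (L i - set as) \<union> set bs)"

lemma modL_coll: "collection L \<Longrightarrow> collection (modL L)"
  unfolding collection_def modL_def by (auto split: prod.splits)

lemma modL_hit: "modL L (to_nat (i, as, bs)) = (L i - set as) \<union> set bs"
  unfolding modL_def by simp

lemma transfer:
  assumes ins: "\<And>W K a. infinite K \<Longrightarrow> a \<notin> K \<Longrightarrow> mu W (insert a K) = mu W K"
    and G: "element_based G" "\<forall>L. collection L \<longrightarrow> generates_density mu rho enum_exact G L"
  shows "\<exists>G. element_based G \<and> (\<forall>L. collection L \<longrightarrow> generates_density mu rho enum_tolerant G L)"
proof (intro exI conjI allI impI)
  define G' where "G' = (\<lambda>L xs. G (modL L) xs)"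
  have go: "gen_out G' L x n = gen_out G (modL L) x n" for L x n
    unfolding gen_out_def G'_def by simp
  have eb: "gen_out G L' x n \<notin> x ` {..n} \<and> gen_out G L' x n \<notin> gen_out G L' x ` {..<n}" for L' x n
    using G(1) unfolding element_based_def by blast
  show "element_based G'" unfolding element_based_def go using eb by blast
  fix L assume coll: "collection L"
  have gd: "generates_density mu rho enum_exact G (modL L)" using G(2) modL_coll[OF coll] by blast
  show "generates_density mu rho enum_tolerant G' L"
    unfolding generates_density_def go
  proof (intro ballI allI impI)
    fix K x assume K: "K \<in> range L" and tol: "enum_tolerant K x"
    obtain i where Ki: "K = L i" using K by blast
    have infK: "infinite K" using coll Ki unfolding collection_def by simp
    obtain Kh where Kh: "inj x" "Kh \<subseteq> K" "finite (K - Kh)" "Kh \<subseteq> range x" "finite (range x - Kh)"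
      using tol unfolding enum_tolerant_def by blast
    obtain as where as: "set as = K - Kh" using Kh(3) finite_list by blast
    obtain bs where bs: "set bs = range x - Kh" using Kh(5) finite_list by blast
    have K'eq: "(K - (K - Kh)) \<union> (range x - Kh) = range x" using Kh by auto
    have "modL L (to_nat (i, as, bs)) = range x"
      using modL_hit[of L i as bs] as bs Ki K'eq by simp
    then have K'in: "range x \<in> range (modL L)" by (metis rangeI)
    have ex: "enum_exact (range x) x" unfolding enum_exact_def using Kh(1) by simp
    note gdx = gd[unfolded generates_density_def, rule_format, OF K'in ex]
    obtain n0 where n0: "\<forall>n\<ge>n0. gen_out G (modL L) x n \<in> range x" using gdx by blast
    have dens: "mu (range (gen_out G (modL L) x)) (range x) \<ge> ereal rho" using gdx by blast
    define out where "out = gen_out G (modL L) x"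
    have neq: "out m \<noteq> out n" if "m < n" for m n
    proof -
      have "out n \<notin> out ` {..<n}" using eb[of "modL L" x n] unfolding out_def by blast
      moreover have "m \<in> {..<n}" using that by simp
      ultimately show ?thesis by (metis image_eqI)
    qed
    have injo: "inj out"
    proof (rule injI)
      fix m n assume e: "out m = out n"
      show "m = n"
      proof (rule ccontr)
        assume "m \<noteq> n"
        then consider "m < n" | "n < m" by linarith
        then show False using neq[of m n] neq[of n m] e by cases auto
      qed
    qed
    have "finite (out -` (range x - Kh))" using injo Kh(5) by (simp add: finite_vimageI)
    then obtain n1 where n1: "\<forall>n \<in> out -` (range x - Kh). n \<le> n1"
      using finite_nat_set_iff_bounded_le by blast
    have ev: "\<exists>n0. \<forall>n\<ge>n0. gen_out G (modL L) x n \<in> K"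
    proof (intro exI allI impI)
      fix n assume "max n0 (Suc n1) \<le> n"
      then have "n \<ge> n0" "\<not> n \<le> n1" by auto
      then have "out n \<in> range x" "n \<notin> out -` (range x - Kh)" using n0 n1 unfolding out_def by auto
      then show "gen_out G (modL L) x n \<in> K" using Kh(2) unfolding out_def by auto
    qed
    have "mu (range out) ((K - (K - Kh)) \<union> (range x - Kh)) = mu (range out) K"
      by (rule mu_mod[OF ins]) (use Kh infK in auto)
    then have "mu (range out) (range x) = mu (range out) K" by (simp only: K'eq)
    then have "ereal rho \<le> mu (range (gen_out G (modL L) x)) K" using dens out_def by simp
    with ev show "(\<exists>n0. \<forall>n\<ge>n0. gen_out G (modL L) x n \<in> K) \<and> ereal rho \<le> mu (range (gen_out G (modL L) x)) K" by blast
  qed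
qed

theorem theorem6p17:
  fixes rho_up rho_low :: real
  assumes "0 \<le> rho_up" "rho_up \<le> 1" "0 \<le> rho_low" "rho_low \<le> 1"
  shows "((\<exists>G. element_based G \<and>
            (\<forall>L. collection L \<longrightarrow> generates_density mu_up rho_up enum_exact G L))
          \<longrightarrow> (\<exists>G. element_based G \<and>
            (\<forall>L. collection L \<longrightarrow> generates_density mu_up rho_up enum_tolerant G L)))
       \<and> ((\<exists>G. element_based G \<and>
            (\<forall>L. collection L \<longrightarrow> generates_density mu_low rho_low enum_exact G L))
          \<longrightarrow> (\<exists>G. element_based G \<and>
            (\<forall>L. collection L \<longrightarrow> generates_density mu_low rho_low enum_tolerant G L)))"
proof (intro conjI impI)
  assume "\<exists>G. element_based G \<and> (\<forall>L. collection L \<longrightarrow> generates_density mu_up rho_up enum_exact G L)"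
  then obtain G where "element_based G" "\<forall>L. collection L \<longrightarrow> generates_density mu_up rho_up enum_exact G L" by blast
  then show "\<exists>G. element_based G \<and> (\<forall>L. collection L \<longrightarrow> generates_density mu_up rho_up enum_tolerant G L)"
    using transfer[where mu=mu_up and rho=rho_up and G=G] mu_insert(1) by blast
next
  assume "\<exists>G. element_based G \<and> (\<forall>L. collection L \<longrightarrow> generates_density mu_low rho_low enum_exact G L)"
  then obtain G where "element_based G" "\<forall>L. collection L \<longrightarrow> generates_density mu_low rho_low enum_exact G L" by blast
  then show "\<exists>G. element_based G \<and> (\<forall>L. collection L \<longrightarrow> generates_density mu_low rho_low enum_tolerant G L)"
    using transfer[where mu=mu_low and rho=rho_low and G=G] mu_insert(2) by blast
qed

end
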